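(* Let $p>155$ be a prime, let $G$ be a cyclic group of order $p$, and let $S$ be an unsplittable minimal zero-sum sequence over $G$ of length $|S|=\frac{p-1}{2}$. Suppose $S=g^{r_1}(t_2g)^{r_2}(t_3g)^{r_3}(t_4g)^{r_4}$ with $g\in G$, nonnegative integers $r_1,\dots,r_4$, and integers $2\le t_2,t_3,t_4\le p-1$, where $r_2+r_3+r_4\le 15$. If $r_i\ge 2$ for some $i\in\{2,3,4\}$, then $t_i\ge\frac{p+3}{2}$.
   Context: A sequence over $G$ is a finite unordered list of elements of $G$ with repetition allowed, written multiplicatively; $h^r$ denotes $r$ copies of $h$ and $tg$ is the $t$-fold multiple of $g$. $|S|$ is the length, $\sigma(S)$ the sum of terms, and $\operatorname{supp}(S)$ the set of distinct elements occurring. $S$ is a minimal zero-sum sequence if $\sigma(S)=0$ and no subsequence $U$ with $1\le|U|<|S|$ has $\sigma(U)=0$. A minimal zero-sum sequence $S$ is unsplittable if there do not exist $h\in\operatorname{supp}(S)$ and $y,z\in G$ with $y+z=h$ such that the sequence obtained from $S$ by replacing one copy of $h$ with the two terms $y,z$ is again a minimal zero-sum sequence. *)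

theory Defs
  imports Main "HOL-Library.Multiset" "HOL-Library.Cardinality" "HOL-Computational_Algebra.Primes"
begin

fun nmul :: "nat \<Rightarrow> 'a::ab_group_add \<Rightarrow> 'a" where
  "nmul 0 g = 0"
| "nmul (Suc n) g = g + nmul n g"

definition cyclic_group :: "'a::ab_group_add itself \<Rightarrow> bool" where
  "cyclic_group _ \<longleftrightarrow> (\<exists>g::'a. \<forall>x::'a. \<exists>n. x = nmul n g)"

definition min_zero_sum :: "'a::ab_group_add multiset \<Rightarrow> bool" where
  "min_zero_sum S \<longleftrightarrow> sum_mset S = 0 \<and>
     (\<forall>U. U \<subseteq># S \<and> 1 \<le> size U \<and> size U < size S \<longrightarrow> sum_mset U \<noteq> 0)"

definition unsplittable :: "'a::ab_group_add multiset \<Rightarrow> bool" where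
  "unsplittable S \<longleftrightarrow> min_zero_sum S \<and>
     \<not> (\<exists>h y z. h \<in># S \<and> y + z = h \<and> min_zero_sum (S - {#h#} + {#y, z#}))"

end

theory Submission
  imports Defs
begin


lemma nmul_add: "nmul (a + b) x = nmul a x + nmul b x"
  by (induction a) (auto simp: add.assoc)

lemma nmul_zero[simp]: "nmul k (0::'a::ab_group_add) = 0"
  by (induction k) auto

lemma nmul_mult: "nmul (a * b) x = nmul a (nmul b x)"
  by (induction a) (auto simp: nmul_add)

lemma sum_mset_rep: "sum_mset (replicate_mset k x) = nmul k x"
  by (induction k) auto

lemma sum_const_nmul: "finite A \<Longrightarrow> sum (\<lambda>_. y) A = nmul (card A) y"
  by (induction rule: finite_induct) auto

lemma nmul_CARD: "nmul CARD('a::{ab_group_add,finite}) (y::'a) = 0"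
proof -
  have "sum (\<lambda>x. x + y) (UNIV::'a set) = sum (\<lambda>x. x) UNIV"
    by (rule sum.reindex_bij_witness[of _ "\<lambda>x. x - y" "\<lambda>x. x + y"]) auto
  hence "sum (\<lambda>x. x) (UNIV::'a set) + sum (\<lambda>_. y) (UNIV::'a set) = sum (\<lambda>x. x) UNIV"
    by (simp add: sum.distrib)
  hence "sum (\<lambda>_. y) (UNIV::'a set) = 0" by simp
  moreover have "sum (\<lambda>_. y) (UNIV::'a set) = nmul CARD('a) y" by (rule sum_const_nmul) simp
  ultimately show ?thesis by simp
qed

lemma nmul_zero_iff:
  assumes "prime p" "CARD('a::{ab_group_add,finite}) = p" "(g::'a) \<noteq> 0"
  shows "nmul a g = 0 \<longleftrightarrow> p dvd a"
proof
  assume "p dvd a"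
  then obtain q where "a = q * p" by (metis dvd_def mult.commute)
  thus "nmul a g = 0" using nmul_CARD[of g] assms(2) by (simp add: nmul_mult)
next
  assume a: "nmul a g = 0"
  show "p dvd a"
  proof (rule ccontr)
    assume "\<not> p dvd a"
    hence "a \<noteq> 0" by (metis dvd_0_right)
    have "coprime a p" using \<open>\<not> p dvd a\<close> assms(1)
      by (metis coprime_commute prime_imp_coprime)
    hence "gcd a p = 1" by simp
    then obtain x y where xy: "a * x = p * y + 1" using bezout_nat[OF \<open>a \<noteq> 0\<close>, of p] by auto
    have "nmul (a * x) g = 0" using a by (simp add: nmul_mult mult.commute[of a])
    moreover have "nmul (p * y + 1) g = g"
      using nmul_CARD[of g] assms(2) by (simp add: nmul_add nmul_mult mult.commute[of p])
    ultimately show False using xy assms(3) by simp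
  qed
qed

lemma mset_le_add_split:
  assumes "U \<subseteq># A + B"
  shows "\<exists>U1 U2. U = U1 + U2 \<and> U1 \<subseteq># A \<and> U2 \<subseteq># B"
proof (intro exI conjI)
  show "U = (U \<inter># A) + (U - (U \<inter># A))"
    by (simp add: multiset_eq_iff min_def)
  show "U \<inter># A \<subseteq># A" by simp
  show "U - U \<inter># A \<subseteq># B" using assms
    by (auto simp: subseteq_mset_def) (metis add.commute le_diff_conv)
qed

lemma sub_rep: "U \<subseteq># replicate_mset k x \<Longrightarrow> \<exists>a\<le>k. U = replicate_mset a x"
proof -
  assume h: "U \<subseteq># replicate_mset k x"
  have "\<forall>y. y \<noteq> x \<longrightarrow> count U y = 0" using h
    by (metis count_replicate_mset le_zero_eq mset_subset_eq_count)
  hence "U = replicate_mset (count U x) x"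
    by (auto simp: multiset_eq_iff)
  moreover have "count U x \<le> k" using h
    by (metis count_replicate_mset mset_subset_eq_count)
  ultimately show ?thesis by blast
qed

lemma sub4:
  assumes "U \<subseteq># replicate_mset r1 x1 + replicate_mset r2 x2 + replicate_mset r3 x3 + replicate_mset r4 x4"
  shows "\<exists>a1 a2 a3 a4. a1 \<le> r1 \<and> a2 \<le> r2 \<and> a3 \<le> r3 \<and> a4 \<le> r4 \<and>
     U = replicate_mset a1 x1 + replicate_mset a2 x2 + replicate_mset a3 x3 + replicate_mset a4 x4"
proof -
  obtain V4 U4 where 1: "U = V4 + U4" "V4 \<subseteq># replicate_mset r1 x1 + replicate_mset r2 x2 + replicate_mset r3 x3" "U4 \<subseteq># replicate_mset r4 x4"
    using mset_le_add_split[OF assms] by blast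
  obtain V3 U3 where 2: "V4 = V3 + U3" "V3 \<subseteq># replicate_mset r1 x1 + replicate_mset r2 x2" "U3 \<subseteq># replicate_mset r3 x3"
    using mset_le_add_split[OF 1(2)] by blast
  obtain U1 U2 where 3: "V3 = U1 + U2" "U1 \<subseteq># replicate_mset r1 x1" "U2 \<subseteq># replicate_mset r2 x2"
    using mset_le_add_split[OF 2(2)] by blast
  show ?thesis using sub_rep[OF 3(2)] sub_rep[OF 3(3)] sub_rep[OF 2(3)] sub_rep[OF 1(3)] 1 2 3
    by blast
qed

lemma sub5:
  assumes "U \<subseteq># replicate_mset r1 x1 + replicate_mset r2 x2 + replicate_mset r3 x3 + replicate_mset r4 x4 + replicate_mset r5 x5"
  shows "\<exists>a1 a2 a3 a4 a5. a1 \<le> r1 \<and> a2 \<le> r2 \<and> a3 \<le> r3 \<and> a4 \<le> r4 \<and> a5 \<le> r5 \<and>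
     U = replicate_mset a1 x1 + replicate_mset a2 x2 + replicate_mset a3 x3 + replicate_mset a4 x4 + replicate_mset a5 x5"
proof -
  obtain V U5 where 1: "U = V + U5" "V \<subseteq># replicate_mset r1 x1 + replicate_mset r2 x2 + replicate_mset r3 x3 + replicate_mset r4 x4" "U5 \<subseteq># replicate_mset r5 x5"
    using mset_le_add_split[OF assms] by blast
  show ?thesis using sub4[OF 1(2)] sub_rep[OF 1(3)] 1 by blast
qed

lemma rep_mono: "a \<le> b \<Longrightarrow> replicate_mset a x \<subseteq># replicate_mset b x"
  by (simp add: replicate_mset_msubseteq_iff)

lemma sub4_le:
  "a1 \<le> r1 \<Longrightarrow> a2 \<le> r2 \<Longrightarrow> a3 \<le> r3 \<Longrightarrow> a4 \<le> r4 \<Longrightarrow>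
   replicate_mset a1 x1 + replicate_mset a2 x2 + replicate_mset a3 x3 + replicate_mset a4 x4
   \<subseteq># replicate_mset r1 x1 + replicate_mset r2 x2 + replicate_mset r3 x3 + replicate_mset r4 x4"
  by (intro subset_mset.add_mono rep_mono)

lemma sum4: "sum_mset (replicate_mset a1 g + replicate_mset a2 (nmul t2 g) + replicate_mset a3 (nmul t3 g) + replicate_mset a4 (nmul t4 g))
   = nmul (a1 + a2*t2 + a3*t3 + a4*t4) (g::'a::ab_group_add)"
  by (simp add: sum_mset_rep nmul_add nmul_mult)

lemma split_cond:
  fixes S :: "'a::ab_group_add multiset" and g :: 'a
  assumes ord: "\<And>a. nmul a g = 0 \<longleftrightarrow> p dvd a"
    and S: "S = replicate_mset r1 g + replicate_mset ri (nmul ti g) + replicate_mset rj (nmul tj g) + replicate_mset rk (nmul tk g)"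
    and uns: "unsplittable S" and ri: "1 \<le> ri" and ti: "1 \<le> ti" and r1: "1 \<le> r1"
  shows "\<exists>j ci cj ck. j \<le> r1 \<and> ci + 1 \<le> ri \<and> cj \<le> rj \<and> ck \<le> rk \<and> p dvd (j + 1 + ci*ti + cj*tj + ck*tk)"
proof -
  let ?h = "nmul ti g"
  let ?z = "nmul (ti - 1) g"
  have mz: "min_zero_sum S" using uns unfolding unsplittable_def by blast
  have M: "\<And>U. U \<subseteq># S \<Longrightarrow> 1 \<le> size U \<Longrightarrow> size U < size S \<Longrightarrow> sum_mset U \<noteq> 0"
    using mz unfolding min_zero_sum_def by blast
  have "sum_mset S = 0" using mz unfolding min_zero_sum_def by blast
  hence Z: "p dvd (r1 + ri*ti + rj*tj + rk*tk)" using S sum4 ord by metis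
  have hz: "g + ?z = ?h" using ti by (cases ti) auto
  have hS: "?h \<in># S" using S ri by auto
  have notmz: "\<not> min_zero_sum (S - {#?h#} + {#g, ?z#})"
    using uns hS hz unfolding unsplittable_def by blast
  obtain ri' where ri': "ri = Suc ri'" using ri by (cases ri) auto
  have S'eq: "S - {#?h#} + {#g, ?z#} = replicate_mset (r1+1) g + replicate_mset (ri - 1) ?h
      + replicate_mset rj (nmul tj g) + replicate_mset rk (nmul tk g) + replicate_mset 1 ?z"
    using ri' S by (simp add: ac_simps)
  have "sum_mset (S - {#?h#} + {#g, ?z#}) = sum_mset S - ?h + (g + ?z)"
    using sum_mset.remove[OF hS] by (simp add: algebra_simps)
  hence sum0: "sum_mset (S - {#?h#} + {#g, ?z#}) = 0" using hz \<open>sum_mset S = 0\<close> by (simp add: add_diff_eq)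
  have szS: "size S = r1 + ri + rj + rk" using S by simp
  have szS': "size (S - {#?h#} + {#g, ?z#}) = size S + 1" using S'eq szS ri' by simp
  obtain U where U: "U \<subseteq># S - {#?h#} + {#g, ?z#}" "1 \<le> size U" "size U < size S + 1" "sum_mset U = 0"
    using notmz sum0 szS' unfolding min_zero_sum_def by auto
  obtain b1 b2 b3 b4 b5 where b: "b1 \<le> r1+1" "b2 \<le> ri - 1" "b3 \<le> rj" "b4 \<le> rk" "b5 \<le> 1"
    and Ueq: "U = replicate_mset b1 g + replicate_mset b2 ?h + replicate_mset b3 (nmul tj g) + replicate_mset b4 (nmul tk g) + replicate_mset b5 ?z"
    using sub5[OF U(1)[unfolded S'eq]] by blast
  have "sum_mset U = nmul (b1 + b2*ti + b3*tj + b4*tk + b5*(ti - 1)) g"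
    unfolding Ueq by (simp add: sum_mset_rep nmul_add nmul_mult)
  hence Y: "p dvd (b1 + b2*ti + b3*tj + b4*tk + b5*(ti - 1))" using U(4) ord by simp
  have szU: "size U = b1 + b2 + b3 + b4 + b5" unfolding Ueq by simp
  show ?thesis
  proof (cases "b5 = 0")
    case True
    show ?thesis
    proof (cases "b1 \<le> r1")
      case True
      let ?V = "replicate_mset b1 g + replicate_mset b2 ?h + replicate_mset b3 (nmul tj g) + replicate_mset b4 (nmul tk g)"
      have "?V \<subseteq># S" unfolding S using True b by (intro sub4_le) auto
      moreover have "size ?V = size U" using szU \<open>b5 = 0\<close> by simp
      moreover have "size U < size S" using szU \<open>b5 = 0\<close> True b szS ri' by simp
      moreover have "sum_mset ?V = 0" using U(4) Ueq \<open>b5 = 0\<close> by simp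
      ultimately show ?thesis using M U(2) by metis
    next
      case False
      hence "b1 = r1 + 1" using b by simp
      thus ?thesis using Y \<open>b5 = 0\<close> b ri' by (intro exI[of _ r1] exI[of _ b2] exI[of _ b3] exI[of _ b4]) simp
    qed
  next
    case False
    hence b5: "b5 = 1" using b by simp
    show ?thesis
    proof (cases "b1 \<le> r1")
      case True
      define j where "j = r1 - b1"
      define ci where "ci = ri - 1 - b2"
      define cj where "cj = rj - b3"
      define ck where "ck = rk - b4"
      obtain ti' where ti': "ti = Suc ti'" using ti by (cases ti) auto
      have e: "r1 = b1 + j" "ri = b2 + ci + 1" "rj = b3 + cj" "rk = b4 + ck"
        using True b ri' unfolding j_def ci_def cj_def ck_def by auto
      have "r1 + ri*ti + rj*tj + rk*tk = (b1 + b2*ti + b3*tj + b4*tk + b5*(ti - 1)) + (j + 1 + ci*ti + cj*tj + ck*tk)"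
        unfolding e b5 ti' by (simp add: algebra_simps)
      hence "p dvd (j + 1 + ci*ti + cj*tj + ck*tk)" using Z Y by (metis dvd_add_right_iff)
      thus ?thesis using e by (intro exI[of _ j] exI[of _ ci] exI[of _ cj] exI[of _ ck]) auto
    next
      case False
      hence b1: "b1 = r1 + 1" using b by simp
      obtain ti' where ti': "ti = Suc ti'" using ti by (cases ti) auto
      let ?V = "replicate_mset r1 g + replicate_mset (b2+1) ?h + replicate_mset b3 (nmul tj g) + replicate_mset b4 (nmul tk g)"
      have "?V \<subseteq># S" unfolding S using b ri' by (intro sub4_le) auto
      moreover have "size ?V < size S" using szU U(3) b1 b5 by simp
      moreover have "1 \<le> size ?V" using r1 by simp
      moreover have "sum_mset ?V = 0"
      proof -
        have "r1 + (b2+1)*ti + b3*tj + b4*tk = b1 + b2*ti + b3*tj + b4*tk + b5*(ti - 1)"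
          unfolding b1 b5 ti' by (simp add: algebra_simps)
        thus ?thesis using Y ord by (simp only: sum4)
      qed
      ultimately show ?thesis using M by metis
    qed
  qed
qed



locale core =
  fixes n r1 r2 r3 r4 t2 t3 t4 :: int
  assumes n78: "78 \<le> n"
  and rnn: "0 \<le> r1" "0 \<le> r2" "0 \<le> r3" "0 \<le> r4"
  and sz: "r1 + r2 + r3 + r4 = n"
  and mle: "r2 + r3 + r4 \<le> 15" and mge: "2 \<le> r2 + r3 + r4"
  and tb: "2 \<le> t2" "t2 \<le> 2*n" "2 \<le> t3" "t3 \<le> 2*n" "2 \<le> t4" "t4 \<le> 2*n"
  and Z: "(2*n+1) dvd (r1 + r2*t2 + r3*t3 + r4*t4)"
  and M: "\<And>a1 a2 a3 a4. 0 \<le> a1 \<Longrightarrow> a1 \<le> r1 \<Longrightarrow> 0 \<le> a2 \<Longrightarrow> a2 \<le> r2 \<Longrightarrow> 0 \<le> a3 \<Longrightarrow> a3 \<le> r3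
      \<Longrightarrow> 0 \<le> a4 \<Longrightarrow> a4 \<le> r4 \<Longrightarrow> 1 \<le> a1+a2+a3+a4 \<Longrightarrow> a1+a2+a3+a4 < n
      \<Longrightarrow> \<not> (2*n+1) dvd (a1 + a2*t2 + a3*t3 + a4*t4)"
  and C2: "1 \<le> r2 \<Longrightarrow> \<exists>j c2 c3 c4. 0 \<le> j \<and> j \<le> r1 \<and> 0 \<le> c2 \<and> c2 + 1 \<le> r2 \<and> 0 \<le> c3 \<and> c3 \<le> r3
      \<and> 0 \<le> c4 \<and> c4 \<le> r4 \<and> (2*n+1) dvd (j + 1 + c2*t2 + c3*t3 + c4*t4)"
  and C3: "1 \<le> r3 \<Longrightarrow> \<exists>j c2 c3 c4. 0 \<le> j \<and> j \<le> r1 \<and> 0 \<le> c2 \<and> c2 \<le> r2 \<and> 0 \<le> c3 \<and> c3 + 1 \<le> r3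
      \<and> 0 \<le> c4 \<and> c4 \<le> r4 \<and> (2*n+1) dvd (j + 1 + c2*t2 + c3*t3 + c4*t4)"
  and C4: "1 \<le> r4 \<Longrightarrow> \<exists>j c2 c3 c4. 0 \<le> j \<and> j \<le> r1 \<and> 0 \<le> c2 \<and> c2 \<le> r2 \<and> 0 \<le> c3 \<and> c3 \<le> r3
      \<and> 0 \<le> c4 \<and> c4 + 1 \<le> r4 \<and> (2*n+1) dvd (j + 1 + c2*t2 + c3*t3 + c4*t4)"
begin

lemma small_ndvd: "0 < (x::int) \<Longrightarrow> x < 2*n+1 \<Longrightarrow> \<not> (2*n+1) dvd x"
  by (auto dest: zdvd_imp_le)

lemma L1: assumes "1 \<le> r2" shows "t2 \<le> n + (r2+r3+r4)"
proof (rule ccontr)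
  assume h: "\<not> ?thesis"
  have "\<not> (2*n+1) dvd ((2*n+1-t2) + 1*t2 + 0*t3 + 0*t4)"
    by (rule M) (use h assms tb sz mge rnn in auto)
  thus False by simp
qed

lemma LJ: assumes "1 \<le> r2"
  shows "\<exists>c2 c3 c4. 0 \<le> c2 \<and> c2 + 1 \<le> r2 \<and> 0 \<le> c3 \<and> c3 \<le> r3 \<and> 0 \<le> c4 \<and> c4 \<le> r4
      \<and> 1 \<le> c2+c3+c4 \<and> (2*n+1) dvd (r1 + 1 + c2*t2 + c3*t3 + c4*t4)"
proof -
  obtain j c2 c3 c4 where c: "0 \<le> j" "j \<le> r1" "0 \<le> c2" "c2 + 1 \<le> r2" "0 \<le> c3" "c3 \<le> r3"
      "0 \<le> c4" "c4 \<le> r4" "(2*n+1) dvd (j + 1 + c2*t2 + c3*t3 + c4*t4)"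
    using C2[OF assms] by blast
  have "j = r1"
  proof (rule ccontr)
    assume "j \<noteq> r1"
    have "\<not> (2*n+1) dvd ((j+1) + c2*t2 + c3*t3 + c4*t4)"
      by (rule M) (use c \<open>j \<noteq> r1\<close> sz in auto)
    thus False using c(9) by (simp add: add.assoc)
  qed
  moreover have "1 \<le> c2+c3+c4"
  proof (rule ccontr)
    assume "\<not> 1 \<le> c2+c3+c4"
    hence "c2 = 0" "c3 = 0" "c4 = 0" using c by auto
    hence "(2*n+1) dvd (j + 1)" using c(9) by simp
    moreover have "0 < j + 1" "j + 1 < 2*n+1" using c sz rnn by auto
    ultimately show False using small_ndvd by blast
  qed
  ultimately show ?thesis using c by blast
qed

lemma LA: assumes "1 \<le> r2" shows "r1 + 2 \<le> t2"
proof (rule ccontr)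
  assume h: "\<not> ?thesis"
  obtain c2 c3 c4 where c: "0 \<le> c2" "c2 + 1 \<le> r2" "0 \<le> c3" "c3 \<le> r3" "0 \<le> c4" "c4 \<le> r4"
      "1 \<le> c2+c3+c4" "(2*n+1) dvd (r1 + 1 + c2*t2 + c3*t3 + c4*t4)"
    using LJ[OF assms] by blast
  have e: "(t2-1) + (r2-c2-1)*t2 + (r3-c3)*t3 + (r4-c4)*t4
      = (r1 + r2*t2 + r3*t3 + r4*t4) - (r1 + 1 + c2*t2 + c3*t3 + c4*t4)"
    by (simp add: algebra_simps)
  have nd: "\<not> (2*n+1) dvd ((t2-1) + (r2-c2-1)*t2 + (r3-c3)*t3 + (r4-c4)*t4)"
    by (rule M) (use c h tb sz in auto)
  have "(2*n+1) dvd ((r1 + r2*t2 + r3*t3 + r4*t4) - (r1 + 1 + c2*t2 + c3*t3 + c4*t4))"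
    using Z c(8) by (rule dvd_diff)
  hence "(2*n+1) dvd ((t2-1) + (r2-c2-1)*t2 + (r3-c3)*t3 + (r4-c4)*t4)" unfolding e .
  with nd show False by contradiction
qed

lemma LC: assumes "2 \<le> r2" "2*t2 \<le> 2*n+3" shows "t2 = n+1"
proof -
  have A: "r1 + 2 \<le> t2" using LA assms by simp
  have "2*t2 \<ge> 2*n+2"
  proof (rule ccontr)
    assume h: "\<not> ?thesis"
    have "\<not> (2*n+1) dvd ((2*n+1-2*t2) + 2*t2 + 0*t3 + 0*t4)"
      by (rule M) (use h A assms sz mle rnn n78 in auto)
    thus False by simp
  qed
  thus ?thesis using assms by presburger
qed

lemma LD: assumes "t2 = n+1" "1 \<le> r2" "1 \<le> r3" "r1 + 2 \<le> t3" shows "n+1 \<le> t3"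
proof (rule ccontr)
  assume h: "\<not> ?thesis"
  have "\<not> (2*n+1) dvd ((n-t3) + 1*t2 + 1*t3 + 0*t4)"
    by (rule M) (use h assms sz mle rnn n78 in auto)
  thus False using assms by simp
qed

lemma LE: assumes "t2 = n+1" "1 \<le> r3 \<Longrightarrow> t3 = n+1" "1 \<le> r4 \<Longrightarrow> t4 = n+1" shows False
proof -
  have 3: "r3*t3 = r3*(n+1)"
  proof (cases "r3 = 0")
    case False
    hence "1 \<le> r3" using rnn by simp
    thus ?thesis using assms(2) by simp
  qed simp
  have 4: "r4*t4 = r4*(n+1)"
  proof (cases "r4 = 0")
    case False
    hence "1 \<le> r4" using rnn by simp
    thus ?thesis using assms(3) by simp
  qed simp
  have "r1 + r2*t2 + r3*t3 + r4*t4 = n * (r2+r3+r4+1)"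
    unfolding 3 4 assms(1) using sz by (simp add: algebra_simps)
  hence d1: "(2*n+1) dvd (n * (r2+r3+r4+1))" using Z by simp
  have d2: "(2*n+1) dvd ((2*n+1)*(r2+r3+r4+1) - 2 * (n * (r2+r3+r4+1)))"
    by (rule dvd_diff) (use d1 in auto)
  have "(2*n+1)*(r2+r3+r4+1) - 2 * (n * (r2+r3+r4+1)) = r2+r3+r4+1"
    by (simp add: algebra_simps)
  hence "(2*n+1) dvd (r2+r3+r4+1)" using d2 by simp
  thus False using small_ndvd[of "r2+r3+r4+1"] mle mge n78 by linarith
qed


lemma chain:
  assumes T2: "1 \<le> r2 \<Longrightarrow> n+1 \<le> t2 \<and> t2 \<le> n + (r2+r3+r4)"
    and T3: "1 \<le> r3 \<Longrightarrow> n+1 \<le> t3 \<and> t3 \<le> n + (r2+r3+r4)"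
    and T4: "1 \<le> r4 \<Longrightarrow> n+1 \<le> t4 \<and> t4 \<le> n + (r2+r3+r4)"
  shows "0 \<le> a2 \<Longrightarrow> a2 \<le> r2 \<Longrightarrow> 0 \<le> a3 \<Longrightarrow> a3 \<le> r3 \<Longrightarrow> 0 \<le> a4 \<Longrightarrow> a4 \<le> r4
    \<Longrightarrow> a2+a3+a4 = int K \<Longrightarrow> int K \<le> r2+r3+r4 - 1 \<Longrightarrow>
     int K + 2*(a2*(t2-n-1) + a3*(t3-n-1) + a4*(t4-n-1)) \<le> 4*(r2+r3+r4) - 2 \<and>
     (odd K \<longrightarrow> int K + 2*(a2*(t2-n-1) + a3*(t3-n-1) + a4*(t4-n-1)) \<le> 2*(r2+r3+r4) - 1)"
proof (induction K arbitrary: a2 a3 a4)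
  case 0
  hence "a2 = 0" "a3 = 0" "a4 = 0" by auto
  thus ?case using mge by simp
next
  case (Suc K)
  define D where "D = a2*(t2-n-1) + a3*(t3-n-1) + a4*(t4-n-1)"
  define m where "m = r2+r3+r4"
  obtain b2 b3 b4 d where b: "0 \<le> b2" "b2 \<le> r2" "0 \<le> b3" "b3 \<le> r3" "0 \<le> b4" "b4 \<le> r4"
      "b2+b3+b4 = int K" "0 \<le> d" "d \<le> m - 1" "D = b2*(t2-n-1) + b3*(t3-n-1) + b4*(t4-n-1) + d"
  proof -
    have "1 \<le> a2 \<or> 1 \<le> a3 \<or> 1 \<le> a4" using Suc.prems by linarith
    then consider "1 \<le> a2" | "1 \<le> a3" | "1 \<le> a4" by blast
    thus ?thesis
    proof cases
      case 1
      have "1 \<le> r2" using 1 Suc.prems by linarith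
      show ?thesis by (rule that[of "a2-1" a3 a4 "t2-n-1"]) (use Suc.prems 1 T2[OF \<open>1 \<le> r2\<close>] in \<open>auto simp: D_def m_def algebra_simps\<close>)
    next
      case 2
      have "1 \<le> r3" using 2 Suc.prems by linarith
      show ?thesis by (rule that[of a2 "a3-1" a4 "t3-n-1"]) (use Suc.prems 2 T3[OF \<open>1 \<le> r3\<close>] in \<open>auto simp: D_def m_def algebra_simps\<close>)
    next
      case 3
      have "1 \<le> r4" using 3 Suc.prems by linarith
      show ?thesis by (rule that[of a2 a3 "a4-1" "t4-n-1"]) (use Suc.prems 3 T4[OF \<open>1 \<le> r4\<close>] in \<open>auto simp: D_def m_def algebra_simps\<close>)
    qed
  qed
  have IH: "int K + 2*(D - d) \<le> 4*m - 2 \<and> (odd K \<longrightarrow> int K + 2*(D - d) \<le> 2*m - 1)"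
    using Suc.IH[OF b(1-7)] Suc.prems b(10) unfolding m_def by simp
  have mm: "2 \<le> m" "m \<le> 15" using mge mle unfolding m_def by auto
  have main: "int (Suc K) + 2*D \<le> 4*m - 2 \<and> (odd (Suc K) \<longrightarrow> int (Suc K) + 2*D \<le> 2*m - 1)"
  proof (cases "odd (Suc K)")
    case True
    then obtain q where q: "K = 2*q" by (auto elim!: evenE)
    have ub: "int q + D \<le> 3*m - 2" using IH q b(9) by simp
    have "int (Suc K) + 2*D \<le> 2*m - 1"
    proof (rule ccontr)
      assume h: "\<not> ?thesis"
      have ge: "m \<le> int q + D" using h q by presburger
      have sumeq: "a2*t2 + a3*t3 + a4*t4 = (a2+a3+a4)*(n+1) + D"
        unfolding D_def by (simp add: algebra_simps)
      have "\<not> (2*n+1) dvd ((n - int q - D) + a2*t2 + a3*t3 + a4*t4)"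
        by (rule M) (use Suc.prems ge ub q mm n78 sz in \<open>auto simp: m_def\<close>)
      moreover have "(n - int q - D) + a2*t2 + a3*t3 + a4*t4 = (2*n+1) * (int q + 1)"
      proof -
        have s3: "a2+a3+a4 = 2*int q + 1" using Suc.prems(7) q by simp
        have "(n - int q - D) + a2*t2 + a3*t3 + a4*t4 = (n - int q - D) + (a2*t2 + a3*t3 + a4*t4)" by simp
        also have "\<dots> = (n - int q - D) + ((a2+a3+a4)*(n+1) + D)" using sumeq by simp
        also have "\<dots> = (2*n+1) * (int q + 1)" unfolding s3 by (simp add: algebra_simps)
        finally show ?thesis .
      qed
      ultimately show False by simp
    qed
    thus ?thesis using mm by simp
  next
    case False
    hence "odd K" by simp
    thus ?thesis using IH b(9) False by simp
  qed
  show ?case using main unfolding D_def m_def .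
qed

lemma LF:
  assumes t2: "t2 = n+1" and r3: "1 \<le> r3" and t3: "n+2 \<le> t3"
    and T2: "1 \<le> r2 \<Longrightarrow> n+1 \<le> t2 \<and> t2 \<le> n + (r2+r3+r4)"
    and T3: "1 \<le> r3 \<Longrightarrow> n+1 \<le> t3 \<and> t3 \<le> n + (r2+r3+r4)"
    and T4: "1 \<le> r4 \<Longrightarrow> n+1 \<le> t4 \<and> t4 \<le> n + (r2+r3+r4)"
    and J: "\<exists>c2 c3 c4. 0 \<le> c2 \<and> c2 \<le> r2 \<and> 0 \<le> c3 \<and> c3 + 1 \<le> r3 \<and> 0 \<le> c4 \<and> c4 \<le> r4
      \<and> 1 \<le> c2+c3+c4 \<and> (2*n+1) dvd (r1 + 1 + c2*t2 + c3*t3 + c4*t4)"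
  shows False
proof -
  obtain c2 c3 c4 where c: "0 \<le> c2" "c2 \<le> r2" "0 \<le> c3" "c3 + 1 \<le> r3" "0 \<le> c4" "c4 \<le> r4"
      "1 \<le> c2+c3+c4" "(2*n+1) dvd (r1 + 1 + c2*t2 + c3*t3 + c4*t4)" using J by blast
  define v2 where "v2 = r2 - c2"
  define v3 where "v3 = r3 - c3"
  define v4 where "v4 = r4 - c4"
  define K where "K = nat (v2+v3+v4)"
  define DV where "DV = v2*(t2-n-1) + v3*(t3-n-1) + v4*(t4-n-1)"
  have v: "0 \<le> v2" "v2 \<le> r2" "1 \<le> v3" "v3 \<le> r3" "0 \<le> v4" "v4 \<le> r4"
    using c unfolding v2_def v3_def v4_def by auto
  have Kv: "v2+v3+v4 = int K" using v unfolding K_def by simp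
  have Kle: "int K \<le> r2+r3+r4 - 1" using Kv c unfolding v2_def v3_def v4_def by simp
  have B: "int K + 2*DV \<le> 4*(r2+r3+r4) - 2"
    using chain[OF T2 T3 T4 v(1) v(2) _ v(4) v(5) v(6) Kv Kle] v(3) unfolding DV_def by simp
  have d2: "v2*(t2-n-1) = 0" using t2 by simp
  have d3: "1 \<le> v3*(t3-n-1)"
  proof -
    have "t3-n-1 \<le> v3*(t3-n-1)" using v(3) t3 mult_right_mono[of 1 v3 "t3-n-1"] by simp
    thus ?thesis using t3 by linarith
  qed
  have d4: "0 \<le> v4*(t4-n-1)"
  proof (cases "v4 = 0")
    case False
    hence "1 \<le> r4" using v by simp
    thus ?thesis using T4 v by simp
  qed simp
  have DV1: "1 \<le> DV" unfolding DV_def using d2 d3 d4 by linarith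
  have "(2*n+1) dvd ((r1 + r2*t2 + r3*t3 + r4*t4) - (r1 + 1 + c2*t2 + c3*t3 + c4*t4))"
    using Z c(8) by (rule dvd_diff)
  hence "(2*n+1) dvd (2*((r1 + r2*t2 + r3*t3 + r4*t4) - (r1 + 1 + c2*t2 + c3*t3 + c4*t4)))"
    by (rule dvd_mult)
  hence "(2*n+1) dvd (2*((r1 + r2*t2 + r3*t3 + r4*t4) - (r1 + 1 + c2*t2 + c3*t3 + c4*t4)) - (2*n+1)*int K)"
    using dvd_triv_left by (rule dvd_diff)
  moreover have "2*((r1 + r2*t2 + r3*t3 + r4*t4) - (r1 + 1 + c2*t2 + c3*t3 + c4*t4)) - (2*n+1)*int K
      = int K + 2*DV - 2"
  proof -
    have "r2*t2 + r3*t3 + r4*t4 - (c2*t2 + c3*t3 + c4*t4) = v2*t2 + v3*t3 + v4*t4"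
      unfolding v2_def v3_def v4_def by (simp add: algebra_simps)
    also have "\<dots> = (v2+v3+v4)*(n+1) + DV" unfolding DV_def by (simp add: algebra_simps)
    finally show ?thesis unfolding Kv by (simp add: algebra_simps)
  qed
  ultimately have "(2*n+1) dvd (int K + 2*DV - 2)" by metis
  moreover have "0 < int K + 2*DV - 2" using DV1 Kv v by linarith
  moreover have "int K + 2*DV - 2 < 2*n+1" using B mle n78 by (simp add: algebra_simps)
  ultimately show False using small_ndvd by blast
qed

end


lemma (in core) swap23: "core n r1 r3 r2 r4 t3 t2 t4"
  apply unfold_locales
  apply (use n78 rnn sz mle mge tb Z in \<open>simp_all add: ac_simps\<close>)[15]
  subgoal for a1 a2 a3 a4 using M[of a1 a3 a2 a4] by (simp add: ac_simps)
  subgoal premises p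
  proof -
    obtain j c2 c3 c4 where h: "0 \<le> j" "j \<le> r1" "0 \<le> c2" "0 \<le> c3" "0 \<le> c4" "c2 \<le> r2" "c3 \<le> r3" "c4 \<le> r4"
      "(2*n+1) dvd (j + 1 + c2*t2 + c3*t3 + c4*t4)" "c3 + 1 \<le> r3"
      using C3[OF p] by auto
    show ?thesis by (intro exI[of _ j] exI[of _ c3] exI[of _ c2] exI[of _ c4]) (use h in \<open>simp_all add: ac_simps\<close>)
  qed
  subgoal premises p
  proof -
    obtain j c2 c3 c4 where h: "0 \<le> j" "j \<le> r1" "0 \<le> c2" "0 \<le> c3" "0 \<le> c4" "c2 \<le> r2" "c3 \<le> r3" "c4 \<le> r4"
      "(2*n+1) dvd (j + 1 + c2*t2 + c3*t3 + c4*t4)" "c2 + 1 \<le> r2"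
      using C2[OF p] by auto
    show ?thesis by (intro exI[of _ j] exI[of _ c3] exI[of _ c2] exI[of _ c4]) (use h in \<open>simp_all add: ac_simps\<close>)
  qed
  subgoal premises p
  proof -
    obtain j c2 c3 c4 where h: "0 \<le> j" "j \<le> r1" "0 \<le> c2" "0 \<le> c3" "0 \<le> c4" "c2 \<le> r2" "c3 \<le> r3" "c4 \<le> r4"
      "(2*n+1) dvd (j + 1 + c2*t2 + c3*t3 + c4*t4)" "c4 + 1 \<le> r4"
      using C4[OF p] by auto
    show ?thesis by (intro exI[of _ j] exI[of _ c3] exI[of _ c2] exI[of _ c4]) (use h in \<open>simp_all add: ac_simps\<close>)
  qed
  done

lemma (in core) swap24: "core n r1 r4 r3 r2 t4 t3 t2"
  apply unfold_locales
  apply (use n78 rnn sz mle mge tb Z in \<open>simp_all add: ac_simps\<close>)[15]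
  subgoal for a1 a2 a3 a4 using M[of a1 a4 a3 a2] by (simp add: ac_simps)
  subgoal premises p
  proof -
    obtain j c2 c3 c4 where h: "0 \<le> j" "j \<le> r1" "0 \<le> c2" "0 \<le> c3" "0 \<le> c4" "c2 \<le> r2" "c3 \<le> r3" "c4 \<le> r4"
      "(2*n+1) dvd (j + 1 + c2*t2 + c3*t3 + c4*t4)" "c4 + 1 \<le> r4"
      using C4[OF p] by auto
    show ?thesis by (intro exI[of _ j] exI[of _ c4] exI[of _ c3] exI[of _ c2]) (use h in \<open>simp_all add: ac_simps\<close>)
  qed
  subgoal premises p
  proof -
    obtain j c2 c3 c4 where h: "0 \<le> j" "j \<le> r1" "0 \<le> c2" "0 \<le> c3" "0 \<le> c4" "c2 \<le> r2" "c3 \<le> r3" "c4 \<le> r4"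
      "(2*n+1) dvd (j + 1 + c2*t2 + c3*t3 + c4*t4)" "c3 + 1 \<le> r3"
      using C3[OF p] by auto
    show ?thesis by (intro exI[of _ j] exI[of _ c4] exI[of _ c3] exI[of _ c2]) (use h in \<open>simp_all add: ac_simps\<close>)
  qed
  subgoal premises p
  proof -
    obtain j c2 c3 c4 where h: "0 \<le> j" "j \<le> r1" "0 \<le> c2" "0 \<le> c3" "0 \<le> c4" "c2 \<le> r2" "c3 \<le> r3" "c4 \<le> r4"
      "(2*n+1) dvd (j + 1 + c2*t2 + c3*t3 + c4*t4)" "c2 + 1 \<le> r2"
      using C2[OF p] by auto
    show ?thesis by (intro exI[of _ j] exI[of _ c4] exI[of _ c3] exI[of _ c2]) (use h in \<open>simp_all add: ac_simps\<close>)
  qed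
  done

lemma (in core) swap34: "core n r1 r2 r4 r3 t2 t4 t3"
  apply unfold_locales
  apply (use n78 rnn sz mle mge tb Z in \<open>simp_all add: ac_simps\<close>)[15]
  subgoal for a1 a2 a3 a4 using M[of a1 a2 a4 a3] by (simp add: ac_simps)
  subgoal premises p
  proof -
    obtain j c2 c3 c4 where h: "0 \<le> j" "j \<le> r1" "0 \<le> c2" "0 \<le> c3" "0 \<le> c4" "c2 \<le> r2" "c3 \<le> r3" "c4 \<le> r4"
      "(2*n+1) dvd (j + 1 + c2*t2 + c3*t3 + c4*t4)" "c2 + 1 \<le> r2"
      using C2[OF p] by auto
    show ?thesis by (intro exI[of _ j] exI[of _ c2] exI[of _ c4] exI[of _ c3]) (use h in \<open>simp_all add: ac_simps\<close>)
  qed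
  subgoal premises p
  proof -
    obtain j c2 c3 c4 where h: "0 \<le> j" "j \<le> r1" "0 \<le> c2" "0 \<le> c3" "0 \<le> c4" "c2 \<le> r2" "c3 \<le> r3" "c4 \<le> r4"
      "(2*n+1) dvd (j + 1 + c2*t2 + c3*t3 + c4*t4)" "c4 + 1 \<le> r4"
      using C4[OF p] by auto
    show ?thesis by (intro exI[of _ j] exI[of _ c2] exI[of _ c4] exI[of _ c3]) (use h in \<open>simp_all add: ac_simps\<close>)
  qed
  subgoal premises p
  proof -
    obtain j c2 c3 c4 where h: "0 \<le> j" "j \<le> r1" "0 \<le> c2" "0 \<le> c3" "0 \<le> c4" "c2 \<le> r2" "c3 \<le> r3" "c4 \<le> r4"
      "(2*n+1) dvd (j + 1 + c2*t2 + c3*t3 + c4*t4)" "c3 + 1 \<le> r3"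
      using C3[OF p] by auto
    show ?thesis by (intro exI[of _ j] exI[of _ c2] exI[of _ c4] exI[of _ c3]) (use h in \<open>simp_all add: ac_simps\<close>)
  qed
  done


lemma (in core) main: assumes r2: "2 \<le> r2" shows "2*n+4 \<le> 2*t2"
proof (rule ccontr)
  assume "\<not> ?thesis"
  hence le: "2*t2 \<le> 2*n+3" by simp
  have t2: "t2 = n+1" by (rule LC[OF r2 le])
  have A3: "1 \<le> r3 \<Longrightarrow> r1 + 2 \<le> t3" by (rule core.LA[OF swap23])
  have A4: "1 \<le> r4 \<Longrightarrow> r1 + 2 \<le> t4" by (rule core.LA[OF swap24])
  have U2: "t2 \<le> n + (r2+r3+r4)" using L1 r2 by simp
  have U3: "1 \<le> r3 \<Longrightarrow> t3 \<le> n + (r2+r3+r4)" using core.L1[OF swap23] by (simp add: ac_simps)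
  have U4: "1 \<le> r4 \<Longrightarrow> t4 \<le> n + (r2+r3+r4)" using core.L1[OF swap24] by (simp add: ac_simps)
  have D3: "1 \<le> r3 \<Longrightarrow> n+1 \<le> t3" using LD[OF t2 _ _ A3] r2 by simp
  have D4: "1 \<le> r4 \<Longrightarrow> n+1 \<le> t4" using core.LD[OF swap34 t2 _ _ A4] r2 by simp
  have T2: "1 \<le> r2 \<Longrightarrow> n+1 \<le> t2 \<and> t2 \<le> n + (r2+r3+r4)" using t2 U2 by simp
  have T3: "1 \<le> r3 \<Longrightarrow> n+1 \<le> t3 \<and> t3 \<le> n + (r2+r3+r4)" using D3 U3 by simp
  have T4: "1 \<le> r4 \<Longrightarrow> n+1 \<le> t4 \<and> t4 \<le> n + (r2+r3+r4)" using D4 U4 by simp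
  consider "1 \<le> r3" "n+2 \<le> t3" | "1 \<le> r4" "n+2 \<le> t4" | "(1 \<le> r3 \<Longrightarrow> t3 = n+1)" "(1 \<le> r4 \<Longrightarrow> t4 = n+1)"
    using D3 D4 by force
  thus False
  proof cases
    case 1
    have J: "\<exists>c2 c3 c4. 0 \<le> c2 \<and> c2 \<le> r2 \<and> 0 \<le> c3 \<and> c3 + 1 \<le> r3 \<and> 0 \<le> c4 \<and> c4 \<le> r4
      \<and> 1 \<le> c2+c3+c4 \<and> (2*n+1) dvd (r1 + 1 + c2*t2 + c3*t3 + c4*t4)"
    proof -
      obtain c2 c3 c4 where h: "0 \<le> c2" "c2 + 1 \<le> r3" "0 \<le> c3" "c3 \<le> r2" "0 \<le> c4" "c4 \<le> r4"
        "1 \<le> c2+c3+c4" "(2*n+1) dvd (r1 + 1 + c2*t3 + c3*t2 + c4*t4)"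
        using core.LJ[OF swap23 1(1)] by blast
      show ?thesis by (intro exI[of _ c3] exI[of _ c2] exI[of _ c4]) (use h in \<open>simp_all add: ac_simps\<close>)
    qed
    show False by (rule LF[OF t2 1 T2 T3 T4 J])
  next
    case 2
    have J: "\<exists>c2 c3 c4. 0 \<le> c2 \<and> c2 \<le> r2 \<and> 0 \<le> c3 \<and> c3 + 1 \<le> r4 \<and> 0 \<le> c4 \<and> c4 \<le> r3
      \<and> 1 \<le> c2+c3+c4 \<and> (2*n+1) dvd (r1 + 1 + c2*t2 + c3*t4 + c4*t3)"
    proof -
      obtain c2 c3 c4 where h: "0 \<le> c2" "c2 + 1 \<le> r4" "0 \<le> c3" "c3 \<le> r3" "0 \<le> c4" "c4 \<le> r2"
        "1 \<le> c2+c3+c4" "(2*n+1) dvd (r1 + 1 + c2*t4 + c3*t3 + c4*t2)"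
        using core.LJ[OF swap24 2(1)] by blast
      show ?thesis by (intro exI[of _ c4] exI[of _ c2] exI[of _ c3]) (use h in \<open>simp_all add: ac_simps\<close>)
    qed
    have T2': "1 \<le> r2 \<Longrightarrow> n+1 \<le> t2 \<and> t2 \<le> n + (r2+r4+r3)" using T2 by (simp add: ac_simps)
    have T3': "1 \<le> r4 \<Longrightarrow> n+1 \<le> t4 \<and> t4 \<le> n + (r2+r4+r3)" using T4 by (simp add: ac_simps)
    have T4': "1 \<le> r3 \<Longrightarrow> n+1 \<le> t3 \<and> t3 \<le> n + (r2+r4+r3)" using T3 by (simp add: ac_simps)
    show False by (rule core.LF[OF swap34 t2 2 T2' T3' T4' J])
  next
    case 3
    show False by (rule LE[OF t2 3])
  qed
qed


theorem lemma3p2: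
  fixes p :: nat and S :: "'a::{ab_group_add, finite} multiset"
    and g :: 'a and r1 r2 r3 r4 t2 t3 t4 :: nat
  assumes "prime p" and "p > 155"
    and "CARD('a) = p" and "cyclic_group TYPE('a)"
    and "unsplittable S"
    and "size S = (p - 1) div 2"
    and "S = replicate_mset r1 g + replicate_mset r2 (nmul t2 g)
             + replicate_mset r3 (nmul t3 g) + replicate_mset r4 (nmul t4 g)"
    and "2 \<le> t2" "t2 \<le> p - 1" "2 \<le> t3" "t3 \<le> p - 1" "2 \<le> t4" "t4 \<le> p - 1"
    and "r2 + r3 + r4 \<le> 15"
  shows "(r2 \<ge> 2 \<longrightarrow> 2 * t2 \<ge> p + 3) \<and> (r3 \<ge> 2 \<longrightarrow> 2 * t3 \<ge> p + 3)
       \<and> (r4 \<ge> 2 \<longrightarrow> 2 * t4 \<ge> p + 3)"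
proof -
  note pr = assms(1) and p155 = assms(2) and card = assms(3) and uns = assms(5)
    and szS0 = assms(6) and S = assms(7) and tb = assms(8-13) and mle = assms(14)
  define n0 where "n0 = (p - 1) div 2"
  have "odd p" using pr p155 by (intro prime_odd_nat) auto
  hence p: "p = 2*n0 + 1" unfolding n0_def by presburger
  have n78: "78 \<le> n0" using p p155 by linarith
  have szS: "size S = r1 + r2 + r3 + r4" using S by simp
  have sz: "r1 + r2 + r3 + r4 = n0" using szS szS0 n0_def by simp
  have mz: "min_zero_sum S" using uns unfolding unsplittable_def by blast
  have Msub: "\<And>U. U \<subseteq># S \<Longrightarrow> 1 \<le> size U \<Longrightarrow> size U < size S \<Longrightarrow> sum_mset U \<noteq> 0"
    using mz unfolding min_zero_sum_def by blast
  have r1: "1 \<le> r1" using sz mle n78 by linarith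
  have g0: "g \<noteq> 0"
  proof
    assume g: "g = 0"
    have "g \<in># S" using S r1 by simp
    hence "{#0#} \<subseteq># S" using g by simp
    moreover have "size S > 1" using szS0 n0_def n78 by simp
    ultimately show False using Msub[of "{#0#}"] by simp
  qed
  have ord: "\<And>a. nmul a g = 0 \<longleftrightarrow> p dvd a" using nmul_zero_iff[OF pr card g0] .
  have natZ: "p dvd (r1 + r2*t2 + r3*t3 + r4*t4)"
    using mz S sum4 ord unfolding min_zero_sum_def by metis
  have natM: "\<And>a1 a2 a3 a4. a1 \<le> r1 \<Longrightarrow> a2 \<le> r2 \<Longrightarrow> a3 \<le> r3 \<Longrightarrow> a4 \<le> r4 \<Longrightarrow>
      1 \<le> a1+a2+a3+a4 \<Longrightarrow> a1+a2+a3+a4 < n0 \<Longrightarrow> \<not> p dvd (a1 + a2*t2 + a3*t3 + a4*t4)"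
  proof -
    fix a1 a2 a3 a4 assume h: "a1 \<le> r1" "a2 \<le> r2" "a3 \<le> r3" "a4 \<le> r4" "1 \<le> a1+a2+a3+a4" "a1+a2+a3+a4 < n0"
    let ?V = "replicate_mset a1 g + replicate_mset a2 (nmul t2 g) + replicate_mset a3 (nmul t3 g) + replicate_mset a4 (nmul t4 g)"
    have "?V \<subseteq># S" unfolding S using h by (intro sub4_le)
    moreover have "size ?V = a1+a2+a3+a4" by simp
    moreover have "size ?V < size S" using h szS sz by simp
    ultimately have "sum_mset ?V \<noteq> 0" using Msub h by (metis One_nat_def)
    hence "nmul (a1 + a2*t2 + a3*t3 + a4*t4) g \<noteq> 0" unfolding sum4 .
    thus "\<not> p dvd (a1 + a2*t2 + a3*t3 + a4*t4)" using ord by simp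
  qed
  have nC2: "1 \<le> r2 \<Longrightarrow> \<exists>j c2 c3 c4. j \<le> r1 \<and> c2 + 1 \<le> r2 \<and> c3 \<le> r3 \<and> c4 \<le> r4 \<and> p dvd (j + 1 + c2*t2 + c3*t3 + c4*t4)"
    by (rule split_cond[OF ord S uns _ _ r1]) (use tb in auto)
  have nC3: "1 \<le> r3 \<Longrightarrow> \<exists>j c3 c2 c4. j \<le> r1 \<and> c3 + 1 \<le> r3 \<and> c2 \<le> r2 \<and> c4 \<le> r4 \<and> p dvd (j + 1 + c3*t3 + c2*t2 + c4*t4)"
    by (rule split_cond[OF ord _ uns _ _ r1]) (use tb S in \<open>auto simp: ac_simps\<close>)
  have nC4: "1 \<le> r4 \<Longrightarrow> \<exists>j c4 c2 c3. j \<le> r1 \<and> c4 + 1 \<le> r4 \<and> c2 \<le> r2 \<and> c3 \<le> r3 \<and> p dvd (j + 1 + c4*t4 + c2*t2 + c3*t3)"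
    by (rule split_cond[OF ord _ uns _ _ r1]) (use tb S in \<open>auto simp: ac_simps\<close>)
  have pint: "2 * int n0 + 1 = int p" using p by simp
  have inst: "core (int n0) (int r1) (int r2) (int r3) (int r4) (int t2) (int t3) (int t4)"
    if m2: "2 \<le> r2 + r3 + r4"
  proof (unfold_locales)
    show "78 \<le> int n0" using n78 by simp
    show "0 \<le> int r1" "0 \<le> int r2" "0 \<le> int r3" "0 \<le> int r4" by simp_all
    show "int r1 + int r2 + int r3 + int r4 = int n0" using sz by simp
    show "int r2 + int r3 + int r4 \<le> 15" using mle by simp
    show "2 \<le> int r2 + int r3 + int r4" using m2 by simp
    show "2 \<le> int t2" "int t2 \<le> 2 * int n0" "2 \<le> int t3" "int t3 \<le> 2 * int n0" "2 \<le> int t4" "int t4 \<le> 2 * int n0"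
      using tb p by simp_all
    show "(2 * int n0 + 1) dvd (int r1 + int r2 * int t2 + int r3 * int t3 + int r4 * int t4)"
    proof -
      have "int r1 + int r2 * int t2 + int r3 * int t3 + int r4 * int t4 = int (r1 + r2*t2 + r3*t3 + r4*t4)" by simp
      thus ?thesis unfolding pint using natZ by (metis int_dvd_int_iff)
    qed
  next
    fix a1 a2 a3 a4 :: int
    assume h: "0 \<le> a1" "a1 \<le> int r1" "0 \<le> a2" "a2 \<le> int r2" "0 \<le> a3" "a3 \<le> int r3"
      "0 \<le> a4" "a4 \<le> int r4" "1 \<le> a1 + a2 + a3 + a4" "a1 + a2 + a3 + a4 < int n0"
    have e: "a1 + a2 * int t2 + a3 * int t3 + a4 * int t4 = int (nat a1 + nat a2 * t2 + nat a3 * t3 + nat a4 * t4)"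
      using h by simp
    have nd: "\<not> p dvd (nat a1 + nat a2 * t2 + nat a3 * t3 + nat a4 * t4)"
      by (rule natM) (use h in linarith)+
    show "\<not> (2 * int n0 + 1) dvd (a1 + a2 * int t2 + a3 * int t3 + a4 * int t4)"
      using e nd pint by (metis int_dvd_int_iff)
  next
    assume "1 \<le> int r2"
    then obtain j c2 c3 c4 where c: "j \<le> r1" "c2 + 1 \<le> r2" "c3 \<le> r3" "c4 \<le> r4" "p dvd (j + 1 + c2*t2 + c3*t3 + c4*t4)"
      using nC2 by auto
    have "int j + 1 + int c2 * int t2 + int c3 * int t3 + int c4 * int t4 = int (j + 1 + c2*t2 + c3*t3 + c4*t4)" by simp
    moreover have "p dvd (j + 1 + c2*t2 + c3*t3 + c4*t4)" using c(5) by (simp add: ac_simps)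
    ultimately have "(2 * int n0 + 1) dvd (int j + 1 + int c2 * int t2 + int c3 * int t3 + int c4 * int t4)"
      unfolding pint by (metis int_dvd_int_iff)
    thus "\<exists>j c2 c3 c4. 0 \<le> j \<and> j \<le> int r1 \<and> 0 \<le> c2 \<and> c2 + 1 \<le> int r2 \<and> 0 \<le> c3 \<and> c3 \<le> int r3 \<and>
        0 \<le> c4 \<and> c4 \<le> int r4 \<and> 2 * int n0 + 1 dvd j + 1 + c2 * int t2 + c3 * int t3 + c4 * int t4"
      using c by (intro exI[of _ "int j"] exI[of _ "int c2"] exI[of _ "int c3"] exI[of _ "int c4"]) simp
  next
    assume "1 \<le> int r3"
    then obtain j c3 c2 c4 where c: "j \<le> r1" "c3 + 1 \<le> r3" "c2 \<le> r2" "c4 \<le> r4" "p dvd (j + 1 + c3*t3 + c2*t2 + c4*t4)"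
      using nC3 by auto
    have "int j + 1 + int c2 * int t2 + int c3 * int t3 + int c4 * int t4 = int (j + 1 + c2*t2 + c3*t3 + c4*t4)" by simp
    moreover have "p dvd (j + 1 + c2*t2 + c3*t3 + c4*t4)" using c(5) by (simp add: ac_simps)
    ultimately have "(2 * int n0 + 1) dvd (int j + 1 + int c2 * int t2 + int c3 * int t3 + int c4 * int t4)"
      unfolding pint by (metis int_dvd_int_iff)
    thus "\<exists>j c2 c3 c4. 0 \<le> j \<and> j \<le> int r1 \<and> 0 \<le> c2 \<and> c2 \<le> int r2 \<and> 0 \<le> c3 \<and> c3 + 1 \<le> int r3 \<and>
        0 \<le> c4 \<and> c4 \<le> int r4 \<and> 2 * int n0 + 1 dvd j + 1 + c2 * int t2 + c3 * int t3 + c4 * int t4"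
      using c by (intro exI[of _ "int j"] exI[of _ "int c2"] exI[of _ "int c3"] exI[of _ "int c4"]) simp
  next
    assume "1 \<le> int r4"
    then obtain j c4 c2 c3 where c: "j \<le> r1" "c4 + 1 \<le> r4" "c2 \<le> r2" "c3 \<le> r3" "p dvd (j + 1 + c4*t4 + c2*t2 + c3*t3)"
      using nC4 by auto
    have "int j + 1 + int c2 * int t2 + int c3 * int t3 + int c4 * int t4 = int (j + 1 + c2*t2 + c3*t3 + c4*t4)" by simp
    moreover have "p dvd (j + 1 + c2*t2 + c3*t3 + c4*t4)" using c(5) by (simp add: ac_simps)
    ultimately have "(2 * int n0 + 1) dvd (int j + 1 + int c2 * int t2 + int c3 * int t3 + int c4 * int t4)"
      unfolding pint by (metis int_dvd_int_iff)
    thus "\<exists>j c2 c3 c4. 0 \<le> j \<and> j \<le> int r1 \<and> 0 \<le> c2 \<and> c2 \<le> int r2 \<and> 0 \<le> c3 \<and> c3 \<le> int r3 \<and>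
        0 \<le> c4 \<and> c4 + 1 \<le> int r4 \<and> 2 * int n0 + 1 dvd j + 1 + c2 * int t2 + c3 * int t3 + c4 * int t4"
      using c by (intro exI[of _ "int j"] exI[of _ "int c2"] exI[of _ "int c3"] exI[of _ "int c4"]) simp
  qed
  have G2: "2 * t2 \<ge> p + 3" if "r2 \<ge> 2"
    using core.main[OF inst] that p by simp
  have G3: "2 * t3 \<ge> p + 3" if "r3 \<ge> 2"
    using core.main[OF core.swap23[OF inst]] that p by simp
  have G4: "2 * t4 \<ge> p + 3" if "r4 \<ge> 2"
    using core.main[OF core.swap24[OF inst]] that p by simp
  show ?thesis using G2 G3 G4 by blast
qed

end
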